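(* Let $A$ be a finite set of options containing a default option $0$, and consider $V\ge1$ votes, each a truncated ranking with possible ties, interpreted as in the context, with Llull matrix $v$. Let $W$ be the set of path-revised approval choices of $v$. If $x,y\in A$, $x$ dominates $y$ in the sense of Pareto, and $y\in W$, then $x\in W$.
   Context: A truncated ranking with ties is a weak order on a subset of $A$ (the ranked options); for ranked options, $x$ is preferred to $y$ if strictly above, and ranked equally if tied; every ranked option is preferred to every unranked option; two unranked options are not compared. Llull matrix: $v_{xy}=(\#\{\text{votes preferring }x\text{ to }y\}+\tfrac12\#\{\text{votes ranking }x,y\text{ equally}\})/V$. Path scores: $v^*_{xy}=\max\min(v_{x_0x_1},\dots,v_{x_{m-1}x_m})$ over all paths $x_0\dots x_m$ ($m\ge1$, $x_0=x$, $x_m=y$, $x_i$ pairwise distinct). For $z\in A$, $D(z)=v^*_{z0}-v^*_{0z}$ if $z\ne0$ and $D(0)=0$; $x$ is a path-revised approval choice if $D(x)\ge D(z)$ for all $z\ne x$. $x$ dominates $y$ in the sense of Pareto if every vote either prefers $x$ to $y$ or ranks them equally, and at least one vote prefers $x$ to $y$. *)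

theory Defs
  imports Complex_Main
begin

text \<open>A ballot is a pair (R, r): R is the set of ranked options and r is a weak order
  on R, where (x, y) \<in> r means that x is ranked at least as high as y.\<close>

type_synonym 'a ballot = "'a set \<times> ('a \<times> 'a) set"

definition weak_order_on :: "'a set \<Rightarrow> ('a \<times> 'a) set \<Rightarrow> bool" where
  "weak_order_on R r \<longleftrightarrow> r \<subseteq> R \<times> R \<and> refl_on R r \<and> trans r \<and> total_on R r"

definition truncated_ranking :: "'a set \<Rightarrow> 'a ballot \<Rightarrow> bool" where
  "truncated_ranking A b \<longleftrightarrow> fst b \<subseteq> A \<and> weak_order_on (fst b) (snd b)"

definition prefers :: "'a ballot \<Rightarrow> 'a \<Rightarrow> 'a \<Rightarrow> bool" where
  "prefers b x y \<longleftrightarrow>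
     (x \<in> fst b \<and> y \<in> fst b \<and> (x, y) \<in> snd b \<and> (y, x) \<notin> snd b)
     \<or> (x \<in> fst b \<and> y \<notin> fst b)"

definition ranks_equal :: "'a ballot \<Rightarrow> 'a \<Rightarrow> 'a \<Rightarrow> bool" where
  "ranks_equal b x y \<longleftrightarrow> x \<in> fst b \<and> y \<in> fst b \<and> (x, y) \<in> snd b \<and> (y, x) \<in> snd b"

definition llull :: "'a ballot list \<Rightarrow> 'a \<Rightarrow> 'a \<Rightarrow> real" where
  "llull vs x y =
     (real (length (filter (\<lambda>b. prefers b x y) vs))
      + real (length (filter (\<lambda>b. ranks_equal b x y) vs)) / 2) / real (length vs)"

definition is_path :: "'a set \<Rightarrow> 'a \<Rightarrow> 'a \<Rightarrow> 'a list \<Rightarrow> bool" where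
  "is_path A x y p \<longleftrightarrow> length p \<ge> 2 \<and> distinct p \<and> set p \<subseteq> A \<and> hd p = x \<and> last p = y"

definition path_strength :: "('a \<Rightarrow> 'a \<Rightarrow> real) \<Rightarrow> 'a list \<Rightarrow> real" where
  "path_strength v p = Min (set (map (\<lambda>(a, b). v a b) (zip p (tl p))))"

definition path_score :: "'a set \<Rightarrow> ('a \<Rightarrow> 'a \<Rightarrow> real) \<Rightarrow> 'a \<Rightarrow> 'a \<Rightarrow> real" where
  "path_score A v x y = Max {path_strength v p | p. is_path A x y p}"

definition Dscore :: "'a set \<Rightarrow> 'a \<Rightarrow> ('a \<Rightarrow> 'a \<Rightarrow> real) \<Rightarrow> 'a \<Rightarrow> real" where
  "Dscore A d v z = (if z = d then 0 else path_score A v z d - path_score A v d z)"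

text \<open>Path-revised approval choices (d is the default option 0).\<close>
definition path_revised_approval :: "'a set \<Rightarrow> 'a \<Rightarrow> ('a \<Rightarrow> 'a \<Rightarrow> real) \<Rightarrow> 'a set" where
  "path_revised_approval A d v =
     {x \<in> A. \<forall>z \<in> A. z \<noteq> x \<longrightarrow> Dscore A d v x \<ge> Dscore A d v z}"

definition pareto_dominates :: "'a ballot list \<Rightarrow> 'a \<Rightarrow> 'a \<Rightarrow> bool" where
  "pareto_dominates vs x y \<longleftrightarrow>
     (\<forall>b \<in> set vs. prefers b x y \<or> ranks_equal b x y) \<and> (\<exists>b \<in> set vs. prefers b x y)"

end

theory Submission
  imports Defs
begin

lemma zip_tl_succ:
  "(\<forall>(a,b)\<in>set (zip p (tl p)). Q a b) \<longleftrightarrow> successively Q p"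
  by (induction p rule: induct_list012) auto

lemma zip_tl_ne: "length p \<ge> 2 \<Longrightarrow> zip p (tl p) \<noteq> []"
  by (cases p; cases "tl p") auto

lemma strength_ge_iff:
  assumes "length p \<ge> 2"
  shows "c \<le> path_strength v p \<longleftrightarrow> successively (\<lambda>a b. c \<le> v a b) p"
proof -
  have ne: "set (map (\<lambda>(a, b). v a b) (zip p (tl p))) \<noteq> {}"
    using zip_tl_ne[OF assms] by simp
  have "c \<le> path_strength v p \<longleftrightarrow> (\<forall>(a,b)\<in>set (zip p (tl p)). c \<le> v a b)"
    unfolding path_strength_def using ne by (auto simp: Min_ge_iff)
  thus ?thesis by (simp add: zip_tl_succ)
qed

lemma paths_finite:
  assumes "finite A" shows "finite {path_strength v p | p. is_path A a b p}"
proof -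
  have "{p. is_path A a b p} \<subseteq> {xs. set xs \<subseteq> A \<and> length xs \<le> card A}"
  proof
    fix p assume "p \<in> {p. is_path A a b p}"
    hence "distinct p" "set p \<subseteq> A" by (auto simp: is_path_def)
    moreover hence "length p \<le> card A"
      using distinct_card[of p] card_mono[OF assms] by metis
    ultimately show "p \<in> {xs. set xs \<subseteq> A \<and> length xs \<le> card A}" by simp
  qed
  hence "finite {p. is_path A a b p}"
    using finite_lists_length_le[OF assms] finite_subset by blast
  thus ?thesis by (simp add: Setcompr_eq_image)
qed

lemma score_le:
  assumes "finite A" "a \<in> A" "b \<in> A" "a \<noteq> b"
    and "\<And>p. is_path A a b p \<Longrightarrow> \<exists>q. is_path A c e q \<and> path_strength v p \<le> path_strength v q"
  shows "path_score A v a b \<le> path_score A v c e"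
proof -
  have "is_path A a b [a,b]" using assms by (simp add: is_path_def)
  hence ne: "{path_strength v p | p. is_path A a b p} \<noteq> {}" by blast
  show ?thesis unfolding path_score_def
  proof (subst Max_le_iff[OF paths_finite[OF assms(1)] ne], clarify)
    fix p assume hp: "is_path A a b p"
    then obtain q where q: "is_path A c e q" "path_strength v p \<le> path_strength v q"
      using assms(5) by blast
    have "path_strength v q \<le> Max {path_strength v p | p. is_path A c e p}"
      using q(1) paths_finite[OF assms(1)] by (intro Max_ge) auto
    thus "path_strength v p \<le> Max {path_strength v p | p. is_path A c e p}" using q(2) by linarith
  qed
qed

lemma L1:
  assumes M1: "\<And>z. z \<noteq> x \<Longrightarrow> z \<noteq> y \<Longrightarrow> v y z \<le> v x z"
    and xA: "x \<in> A" and txy: "t \<noteq> x" "t \<noteq> y" and p: "is_path A y t p"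
  shows "\<exists>q. is_path A x t q \<and> path_strength v p \<le> path_strength v q"
proof -
  define c where "c = path_strength v p"
  have len: "length p \<ge> 2" using p by (simp add: is_path_def)
  have sp: "successively (\<lambda>a b. c \<le> v a b) p" using strength_ge_iff[OF len, of c v] c_def by simp
  show ?thesis
  proof (cases "x \<in> set p")
    case True
    then obtain ys zs where pe: "p = ys @ x # zs" by (meson split_list)
    have "zs \<noteq> []" using p pe txy by (auto simp: is_path_def)
    hence q: "is_path A x t (x # zs)" using p pe by (auto simp: is_path_def Suc_le_eq)
    have "successively (\<lambda>a b. c \<le> v a b) (x # zs)"
      using sp pe by (simp add: successively_append_iff)
    hence "c \<le> path_strength v (x#zs)" using q by (subst strength_ge_iff) (auto simp: is_path_def)
    thus ?thesis using q c_def by blast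
  next
    case False
    obtain r where pe: "p = y # r" "r \<noteq> []" using p len by (cases p) (auto simp: is_path_def Suc_le_eq)
    have q: "is_path A x t (x # r)" using p pe False xA by (auto simp: is_path_def)
    have h: "hd r \<noteq> x" "hd r \<noteq> y" using False pe p by (auto simp: is_path_def)
    have "successively (\<lambda>a b. c \<le> v a b) (x # r)"
      using sp pe M1[OF h] by (auto simp: successively_Cons)
    hence "c \<le> path_strength v (x#r)" using q by (subst strength_ge_iff) (auto simp: is_path_def)
    thus ?thesis using q c_def by blast
  qed
qed

lemma L2:
  assumes M2: "\<And>z. z \<noteq> x \<Longrightarrow> z \<noteq> y \<Longrightarrow> v z x \<le> v z y"
    and yA: "y \<in> A" and txy: "t \<noteq> x" "t \<noteq> y" and p: "is_path A t x p"
  shows "\<exists>q. is_path A t y q \<and> path_strength v p \<le> path_strength v q"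
proof -
  define c where "c = path_strength v p"
  have len: "length p \<ge> 2" using p by (simp add: is_path_def)
  have sp: "successively (\<lambda>a b. c \<le> v a b) p" using strength_ge_iff[OF len, of c v] c_def by simp
  show ?thesis
  proof (cases "y \<in> set p")
    case True
    then obtain ys zs where pe: "p = (ys @ [y]) @ zs" by (metis split_list append_Cons append_Nil append_assoc)
    have "ys \<noteq> []" using p pe txy by (auto simp: is_path_def)
    hence q: "is_path A t y (ys @ [y])" using p pe by (auto simp: is_path_def Suc_le_eq)
    have "successively (\<lambda>a b. c \<le> v a b) (ys @ [y])"
      using sp pe by (simp only: successively_append_iff)
    hence "c \<le> path_strength v (ys @ [y])" using q by (subst strength_ge_iff) (auto simp: is_path_def)
    thus ?thesis using q c_def by blast
  next
    case False
    have pne: "p \<noteq> []" using len by auto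
    define r where "r = butlast p"
    have pe: "p = r @ [x]" "r \<noteq> []"
      using pne p len unfolding r_def is_path_def
      by (metis append_butlast_last_id, cases p rule: rev_cases, auto)
    have q: "is_path A t y (r @ [y])" using p pe False yA by (auto simp: is_path_def)
    have h: "last r \<noteq> x" "last r \<noteq> y" using False pe p by (auto simp: is_path_def)
    have "successively (\<lambda>a b. c \<le> v a b) (r @ [y])"
      using sp pe M2[OF h] by (auto simp: successively_append_iff)
    hence "c \<le> path_strength v (r @ [y])" using q by (subst strength_ge_iff) (auto simp: is_path_def)
    thus ?thesis using q c_def by blast
  qed
qed

lemma L3:
  assumes M1: "\<And>z. z \<noteq> x \<Longrightarrow> z \<noteq> y \<Longrightarrow> v y z \<le> v x z"
    and M2: "\<And>z. z \<noteq> x \<Longrightarrow> z \<noteq> y \<Longrightarrow> v z x \<le> v z y"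
    and M3: "v y x \<le> v x y"
    and p: "is_path A y x p"
  shows "\<exists>q. is_path A x y q \<and> path_strength v p \<le> path_strength v q"
proof -
  define c where "c = path_strength v p"
  have len: "length p \<ge> 2" using p by (simp add: is_path_def)
  have sp: "successively (\<lambda>a b. c \<le> v a b) p" using strength_ge_iff[OF len, of c v] c_def by simp
  obtain a r where ar: "p = a # r" using len by (cases p) auto
  have ay: "a = y" and rne: "r \<noteq> []" and lr: "last r = x"
    using p len ar by (auto simp: is_path_def)
  define m where "m = butlast r"
  have pe: "p = y # m @ [x]" unfolding m_def using ar ay rne lr by (metis append_butlast_last_id)
  have q: "is_path A x y (x # m @ [y])" using p pe by (auto simp: is_path_def)
  have "successively (\<lambda>a b. c \<le> v a b) (x # m @ [y])"
  proof (cases "m = []")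
    case True thus ?thesis using sp pe M3 by auto
  next
    case False
    have h: "hd m \<noteq> x" "hd m \<noteq> y" "last m \<noteq> x" "last m \<noteq> y" using False pe p
      by (auto simp: is_path_def)
    show ?thesis using sp pe False M1[OF h(1,2)] M2[OF h(3,4)]
      by (auto simp: successively_append_iff successively_Cons)
  qed
  hence "c \<le> path_strength v (x # m @ [y])" using q by (subst strength_ge_iff) (auto simp: is_path_def)
    thus ?thesis using q c_def by blast
qed

definition sc :: "'a ballot \<Rightarrow> 'a \<Rightarrow> 'a \<Rightarrow> real" where
  "sc b a c = (if prefers b a c then 1 else 0) + (if ranks_equal b a c then 1/2 else 0)"

lemma count_sum:
  "real (length (filter P vs)) + real (length (filter Q vs)) / 2
   = (\<Sum>b\<leftarrow>vs. (if P b then 1 else 0) + (if Q b then 1/2 else 0))"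
  by (induction vs) (auto simp: field_simps)

lemma llull_sc: "llull vs a c = (\<Sum>b\<leftarrow>vs. sc b a c) / real (length vs)"
  unfolding llull_def sc_def by (simp only: count_sum)

lemma llull_mono:
  assumes "length vs \<ge> 1" "\<And>b. b \<in> set vs \<Longrightarrow> sc b a c \<le> sc b a' c'"
  shows "llull vs a c \<le> llull vs a' c'"
  unfolding llull_sc using assms
  by (intro divide_right_mono sum_list_mono) auto

lemma sc_eq: "sc (R,r) a c = (if a \<in> R then (if c \<in> R then (if (a,c) \<in> r then (if (c,a) \<in> r then 1/2 else 1) else 0) else 1) else 0)"
  unfolding sc_def prefers_def ranks_equal_def by auto

lemma ballot_facts:
  assumes tr: "truncated_ranking A b" and d: "prefers b x y \<or> ranks_equal b x y"
  shows "z \<noteq> x \<Longrightarrow> z \<noteq> y \<Longrightarrow> sc b y z \<le> sc b x z"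
    and "z \<noteq> x \<Longrightarrow> z \<noteq> y \<Longrightarrow> sc b z x \<le> sc b z y"
    and "sc b y x \<le> sc b x y"
proof -
  obtain R r where b: "b = (R, r)" by (cases b)
  have wo: "r \<subseteq> R \<times> R" "\<And>u. u \<in> R \<Longrightarrow> (u,u) \<in> r" "trans r"
    "\<And>u w. u \<in> R \<Longrightarrow> w \<in> R \<Longrightarrow> u \<noteq> w \<Longrightarrow> (u,w) \<in> r \<or> (w,u) \<in> r"
    using tr b unfolding truncated_ranking_def weak_order_on_def refl_on_def total_on_def by auto
  have tr': "\<And>u w s. (u,w) \<in> r \<Longrightarrow> (w,s) \<in> r \<Longrightarrow> (u,s) \<in> r" using wo(3) by (meson transD)
  have xR: "x \<in> R" and xy: "y \<in> R \<Longrightarrow> (x,y) \<in> r"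
    using d unfolding b prefers_def ranks_equal_def by auto
  show "z \<noteq> x \<Longrightarrow> z \<noteq> y \<Longrightarrow> sc b y z \<le> sc b x z"
    unfolding b sc_eq using xR xy tr'[of x y z] tr'[of z x y] by auto
  show "z \<noteq> x \<Longrightarrow> z \<noteq> y \<Longrightarrow> sc b z x \<le> sc b z y"
    unfolding b sc_eq using xR xy tr'[of z x y] tr'[of x y z] wo(1) by auto
  show "sc b y x \<le> sc b x y"
    unfolding b sc_eq using xR xy by auto
qed
theorem corollary4p3:
  fixes A :: "'a set" and d :: 'a and vs :: "'a ballot list" and x y :: 'a
  assumes "finite A" and "d \<in> A"
    and "length vs \<ge> 1"
    and "\<forall>b \<in> set vs. truncated_ranking A b"
    and "x \<in> A" and "y \<in> A"
    and "pareto_dominates vs x y"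
    and "y \<in> path_revised_approval A d (llull vs)"
  shows "x \<in> path_revised_approval A d (llull vs)"
proof -
  let ?v = "llull vs"
  have dom: "\<And>b. b \<in> set vs \<Longrightarrow> prefers b x y \<or> ranks_equal b x y"
    using assms(7) by (simp add: pareto_dominates_def)
  have xy: "x \<noteq> y" using assms(7) by (auto simp: pareto_dominates_def prefers_def)
  have M1: "\<And>z. z \<noteq> x \<Longrightarrow> z \<noteq> y \<Longrightarrow> ?v y z \<le> ?v x z"
    by (rule llull_mono[OF assms(3)], rule ballot_facts(1)[OF bspec[OF assms(4)] dom]) auto
  have M2: "\<And>z. z \<noteq> x \<Longrightarrow> z \<noteq> y \<Longrightarrow> ?v z x \<le> ?v z y"
    by (rule llull_mono[OF assms(3)], rule ballot_facts(2)[OF bspec[OF assms(4)] dom]) auto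
  have M3: "?v y x \<le> ?v x y"
    by (rule llull_mono[OF assms(3)], rule ballot_facts(3)[OF bspec[OF assms(4)] dom]) auto
  have key: "Dscore A d ?v y \<le> Dscore A d ?v x"
  proof (cases "x = d")
    case True
    have "path_score A ?v y x \<le> path_score A ?v x y"
    proof (rule score_le[OF assms(1)])
      fix p assume hp: "is_path A y x p"
      show "\<exists>q. is_path A x y q \<and> path_strength ?v p \<le> path_strength ?v q"
        by (rule L3[where v="llull vs"]) (use M1 M2 M3 hp in auto)
    qed (use assms xy in auto)
    thus ?thesis using True xy by (simp add: Dscore_def)
  next
    case False
    show ?thesis
    proof (cases "y = d")
      case True
      have "path_score A ?v y x \<le> path_score A ?v x y"
      proof (rule score_le[OF assms(1)])
        fix p assume hp: "is_path A y x p"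
        show "\<exists>q. is_path A x y q \<and> path_strength ?v p \<le> path_strength ?v q"
          by (rule L3[where v="llull vs"]) (use M1 M2 M3 hp in auto)
      qed (use assms xy in auto)
      thus ?thesis using True xy by (simp add: Dscore_def)
    next
      case False2: False
      have "path_score A ?v y d \<le> path_score A ?v x d"
      proof (rule score_le[OF assms(1)])
        fix p assume hp: "is_path A y d p"
        show "\<exists>q. is_path A x d q \<and> path_strength ?v p \<le> path_strength ?v q"
          by (rule L1[where v="llull vs"]) (use M1 M2 assms False False2 hp in auto)
      qed (use assms False False2 in auto)
      moreover have "path_score A ?v d x \<le> path_score A ?v d y"
      proof (rule score_le[OF assms(1)])
        fix p assume hp: "is_path A d x p"
        show "\<exists>q. is_path A d y q \<and> path_strength ?v p \<le> path_strength ?v q"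
          by (rule L2[where v="llull vs"]) (use M1 M2 assms False False2 hp in auto)
      qed (use assms False False2 in auto)
      ultimately show ?thesis using False False2 by (simp add: Dscore_def)
    qed
  qed
  have "\<forall>z\<in>A. z \<noteq> x \<longrightarrow> Dscore A d ?v z \<le> Dscore A d ?v x"
  proof (intro ballI impI)
    fix z assume "z \<in> A" "z \<noteq> x"
    show "Dscore A d ?v z \<le> Dscore A d ?v x"
    proof (cases "z = y")
      case True thus ?thesis using key by simp
    next
      case False
      hence "Dscore A d ?v z \<le> Dscore A d ?v y"
        using assms(8) \<open>z \<in> A\<close> by (simp add: path_revised_approval_def)
      thus ?thesis using key by linarith
    qed
  qed
  thus ?thesis using assms(5) by (simp add: path_revised_approval_def)
qed

end
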